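(* Let $\mathbf a=(a_1,\dots,a_k)$ be a sequence of nonnegative integers with $\sum_i a_i=n$, and let $0\le j\le k$. Then $|D_j(\mathbf a)|$ equals the coefficient of $x_1^{a_1}\cdots x_k^{a_k}$ in the power series expansion of \[ \frac{1}{(1+x_1)\cdots(1+x_j)(1-x_1-\dots-x_k)}. \]
   Context: For $\mathbf a=(a_1,\dots,a_k)$ with nonnegative integer entries summing to $n$, put $c_0=0$, $c_j=a_1+\dots+a_j$, and let the $j$-th block be $A_j=\{c_{j-1}+1,\dots,c_j\}\subseteq[n]$ (possibly empty). Let $S_{\mathbf a}\subseteq S_n$ be the set of permutations $\pi$ of $[n]$ such that $\pi_i>\pi_{i+1}$ whenever $i$ and $i+1$ lie in the same block (no condition when they lie in different blocks). A fixed point of $\pi$ is an $i$ with $\pi_i=i$. $D_j(\mathbf a)$ denotes the set of permutations in $S_{\mathbf a}$ having no fixed point in $A_1\cup\dots\cup A_j$. *)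

theory Defs
  imports "HOL-Combinatorics.Permutations"
begin

definition blk :: "nat list \<Rightarrow> nat \<Rightarrow> nat set" where
  "blk a j = {sum_list (take (j - 1) a) + 1 .. sum_list (take j a)}"

definition same_block :: "nat list \<Rightarrow> nat \<Rightarrow> nat \<Rightarrow> bool" where
  "same_block a x y \<longleftrightarrow> (\<exists>j\<in>{1..length a}. x \<in> blk a j \<and> y \<in> blk a j)"

definition S_a :: "nat list \<Rightarrow> (nat \<Rightarrow> nat) set" where
  "S_a a = {\<pi>. \<pi> permutes {1..sum_list a} \<and>
                (\<forall>i. same_block a i (i + 1) \<longrightarrow> \<pi> i > \<pi> (i + 1))}"

definition D_a :: "nat \<Rightarrow> nat list \<Rightarrow> (nat \<Rightarrow> nat) set" where
  "D_a j a = {\<pi> \<in> S_a a. \<forall>i \<in> (\<Union>m\<in>{1..j}. blk a m). \<pi> i \<noteq> i}"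

text \<open>A series is a coefficient function on exponent vectors e :: nat \<Rightarrow> nat;
  variable x_(i+1) corresponds to index i.  Multiplication is the Cauchy product.\<close>
type_synonym mser = "(nat \<Rightarrow> nat) \<Rightarrow> int"

definition ms_mult :: "mser \<Rightarrow> mser \<Rightarrow> mser" where
  "ms_mult f g = (\<lambda>e. \<Sum>d\<in>{d. \<forall>i. d i \<le> e i}. f d * g (\<lambda>i. e i - d i))"

definition ms_one :: mser where
  "ms_one = (\<lambda>e. if e = (\<lambda>_. 0) then 1 else 0)"

definition ms_var :: "nat \<Rightarrow> mser" where
  "ms_var i = (\<lambda>e. if e = (\<lambda>_. 0)(i := 1) then 1 else 0)"

definition one_plus_var :: "nat \<Rightarrow> mser" where
  "one_plus_var i = (\<lambda>e. ms_one e + ms_var i e)"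

definition one_minus_sum :: "nat \<Rightarrow> mser" where
  "one_minus_sum k = (\<lambda>e. ms_one e - (\<Sum>i<k. ms_var i e))"

fun denom :: "nat \<Rightarrow> nat \<Rightarrow> mser" where
  "denom 0 k = one_minus_sum k"
| "denom (Suc j) k = ms_mult (one_plus_var j) (denom j k)"

text \<open>Only exponent vectors
  of finite support are genuine monomials; the coefficient function is normalised to 0
  on the others so that the inverse is unique.\<close>
definition ms_inverse :: "mser \<Rightarrow> mser" where
  "ms_inverse f = (THE g. ms_mult f g = ms_one \<and>
                          (\<forall>e. infinite {i. e i \<noteq> 0} \<longrightarrow> g e = 0))"

definition expvec :: "nat list \<Rightarrow> nat \<Rightarrow> nat" where
  "expvec a = (\<lambda>i. if i < length a then a ! i else 0)"

end

theory Submission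
  imports Defs
begin


abbreviation c :: "nat list \<Rightarrow> nat \<Rightarrow> nat" where
  "c a j \<equiv> sum_list (take j a)"

lemma cS: "c a (Suc j) = c a j + (if j < length a then a!j else 0)"
  by (simp add: take_Suc_conv_app_nth)

lemma c_mono: "j \<le> j' \<Longrightarrow> c a j \<le> c a j'"
proof (induction j' rule: dec_induct)
  case (step n) then show ?case using cS[where a=a and j=n] by simp
qed simp

lemma c_len: "length a \<le> j \<Longrightarrow> c a j = sum_list a"
  by simp

lemma c_le: "c a j \<le> sum_list a"
  using c_mono[where a=a and j=j and j'="max j (length a)"] c_len[where a=a and j="max j (length a)"] by simp

lemma blk_Suc: "blk a (Suc i) = {c a i + 1 .. c a (Suc i)}"
  by (simp add: blk_def)

lemma blk_0: "blk a 0 = {}"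
  by (simp add: blk_def)

lemma blk_bound: "x \<in> blk a m \<Longrightarrow> x \<in> {1..sum_list a}"
  using c_le[where a=a and j=m] by (cases m) (auto simp: blk_def)

lemma blk_cover:
  assumes "x \<in> {1..sum_list a}"
  shows "\<exists>i<length a. x \<in> blk a (Suc i)"
proof -
  have ex: "\<exists>j. x \<le> c a j" using assms by (intro exI[of _ "length a"]) simp
  define j where "j = (LEAST j. x \<le> c a j)"
  have j1: "x \<le> c a j" unfolding j_def using LeastI_ex[OF ex] .
  have j2: "j \<le> length a" unfolding j_def using assms by (intro Least_le) simp
  have "j \<noteq> 0" using j1 assms by (cases j) auto
  then obtain i where i: "j = Suc i" by (cases j) auto
  have "\<not> x \<le> c a i" unfolding j_def using i not_less_Least[of i "\<lambda>j. x \<le> c a j"] j_def by auto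
  then have "x \<in> blk a (Suc i)" using j1 i by (simp add: blk_Suc)
  moreover have "i < length a" using i j2 by simp
  ultimately show ?thesis by blast
qed

lemma blk_disj:
  assumes "x \<in> blk a m" "x \<in> blk a m'"
  shows "m = m'"
proof (rule ccontr)
  assume ne: "m \<noteq> m'"
  have "m \<noteq> 0" "m' \<noteq> 0" using assms blk_0 by (metis empty_iff)+
  then obtain i i' where ii: "m = Suc i" "m' = Suc i'" by (metis not0_implies_Suc)
  { fix i i' assume "i < i'" "x \<in> blk a (Suc i)" "x \<in> blk a (Suc i')"
    then have False using c_mono[of "Suc i" i' a] by (auto simp: blk_Suc) }
  then show False using assms ii ne by (metis linorder_neqE_nat)
qed

lemma mono_equiv:
  "(\<forall>i. same_block a i (i + 1) \<longrightarrow> \<pi> i > \<pi> (i + 1)) \<longleftrightarrow>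
   (\<forall>x y. x < y \<and> same_block a x y \<longrightarrow> \<pi> y < \<pi> x)" for \<pi> :: "nat \<Rightarrow> nat"
proof
  assume H: "\<forall>i. same_block a i (i + 1) \<longrightarrow> \<pi> i > \<pi> (i + 1)"
  have *: "\<pi> (x + Suc d) < \<pi> x" if "m \<in> {1..length a}" "x \<in> blk a m" "x + Suc d \<in> blk a m" for m x d
    using that
  proof (induction d)
    case 0
    have "same_block a x (x+1)" using 0 unfolding same_block_def by auto
    then show ?case using H by auto
  next
    case (Suc d)
    have "x + Suc d \<in> blk a m" using Suc.prems by (auto simp: blk_def)
    then have "\<pi> (x + Suc d) < \<pi> x" using Suc by blast
    moreover have "same_block a (x + Suc d) (x + Suc d + 1)"
      unfolding same_block_def using Suc.prems \<open>x + Suc d \<in> blk a m\<close> by auto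
    then have "\<pi> (x + Suc d + 1) < \<pi> (x + Suc d)" using H by blast
    ultimately show ?case by simp
  qed
  show "\<forall>x y. x < y \<and> same_block a x y \<longrightarrow> \<pi> y < \<pi> x"
  proof (intro allI impI)
    fix x y assume "x < y \<and> same_block a x y"
    then obtain m d where "m \<in> {1..length a}" "x \<in> blk a m" "x + Suc d \<in> blk a m" "y = x + Suc d"
      unfolding same_block_def by (metis less_imp_Suc_add add_Suc_right)
    then show "\<pi> y < \<pi> x" using * by blast
  qed
qed auto

lemma S_a_alt: "S_a a = {\<pi>. \<pi> permutes {1..sum_list a} \<and> (\<forall>x y. x < y \<and> same_block a x y \<longrightarrow> \<pi> y < \<pi> x)}"
  unfolding S_a_def using mono_equiv by blast

lemma finite_S: "finite (S_a a)"
  unfolding S_a_def by (rule finite_subset[OF _ finite_permutations[of "{1..sum_list a}"]]) auto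

lemma finite_D: "finite (D_a j a)"
  unfolding D_a_def using finite_S by simp

definition up :: "nat \<Rightarrow> nat \<Rightarrow> nat" where "up p x = (if x < p then x else Suc x)"
definition dn :: "nat \<Rightarrow> nat \<Rightarrow> nat" where "dn p y = (if y < p then y else y - 1)"

lemma up_dn: "x \<noteq> p \<Longrightarrow> up p (dn p x) = x" by (auto simp: up_def dn_def)
lemma dn_up: "dn p (up p x) = x" by (auto simp: up_def dn_def)
lemma up_neq: "up p x \<noteq> p" by (auto simp: up_def)
lemma up_range: "x \<in> {1..n-1} \<Longrightarrow> p \<in> {1..n} \<Longrightarrow> up p x \<in> {1..n}" by (auto simp: up_def)
lemma dn_range: "x \<in> {1..n} \<Longrightarrow> x \<noteq> p \<Longrightarrow> p \<in> {1..n} \<Longrightarrow> dn p x \<in> {1..n-1}" by (auto simp: dn_def)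
lemma up_mono: "x < y \<Longrightarrow> up p x < up p y" by (auto simp: up_def)
lemma up_mono_iff: "up p x < up p y \<longleftrightarrow> x < y" by (auto simp: up_def)
lemma dn_mono: "x < y \<Longrightarrow> x \<noteq> p \<Longrightarrow> y \<noteq> p \<Longrightarrow> dn p x < dn p y" by (auto simp: dn_def)
lemma dn_mono_iff: "x \<noteq> p \<Longrightarrow> y \<noteq> p \<Longrightarrow> dn p x < dn p y \<longleftrightarrow> x < y" by (auto simp: dn_def)
lemma up_eq_iff: "t \<noteq> p \<Longrightarrow> up p w = t \<longleftrightarrow> w = dn p t" by (auto simp: up_def dn_def)
lemma dn_inj: "x \<noteq> p \<Longrightarrow> y \<noteq> p \<Longrightarrow> dn p x = dn p y \<Longrightarrow> x = y" by (auto simp: dn_def split: if_splits)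
lemma up_inj: "up p x = up p y \<Longrightarrow> x = y" by (auto simp: up_def split: if_splits)

definition delp :: "nat \<Rightarrow> nat \<Rightarrow> nat \<Rightarrow> (nat \<Rightarrow> nat) \<Rightarrow> nat \<Rightarrow> nat" where
  "delp n p v \<pi> = (\<lambda>i. if i \<in> {1..n-1} then dn v (\<pi> (up p i)) else i)"
definition insp :: "nat \<Rightarrow> nat \<Rightarrow> nat \<Rightarrow> (nat \<Rightarrow> nat) \<Rightarrow> nat \<Rightarrow> nat" where
  "insp n p v \<sigma> = (\<lambda>i. if i \<in> {1..n} then (if i = p then v else up v (\<sigma> (dn p i))) else i)"

lemma perm_in: "\<pi> permutes S \<Longrightarrow> x \<in> S \<Longrightarrow> \<pi> x \<in> S"
  by (simp add: permutes_in_image)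

lemma perm_inj: "\<pi> permutes S \<Longrightarrow> \<pi> x = \<pi> y \<Longrightarrow> x = y"
  by (meson permutes_inj injD)

lemma perm_out: "\<pi> permutes S \<Longrightarrow> x \<notin> S \<Longrightarrow> \<pi> x = x"
  by (simp add: permutes_not_in)

lemma endo_permutes:
  assumes "finite S" "\<And>x. x \<in> S \<Longrightarrow> f x \<in> S" "inj_on f S" "\<And>x. x \<notin> S \<Longrightarrow> f x = x"
  shows "f permutes S"
proof (rule bij_imp_permutes)
  have "f ` S = S" using endo_inj_surj[OF assms(1) _ assms(3)] assms(2) by blast
  then show "bij_betw f S S" using assms(3) by (simp add: bij_betw_def)
qed (use assms in auto)

lemma delp_perm:
  assumes \<pi>: "\<pi> permutes {1..n}" and p: "p \<in> {1..n}" and v: "\<pi> p = v"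
  shows "delp n p v \<pi> permutes {1..n-1}"
proof (rule endo_permutes)
  have vn: "v \<in> {1..n}" using perm_in[OF \<pi> p] v by simp
  have ne: "\<pi> (up p x) \<noteq> v" for x using perm_inj[OF \<pi>, of "up p x" p] v up_neq by metis
  show "delp n p v \<pi> x \<in> {1..n-1}" if "x \<in> {1..n-1}" for x
    using that dn_range[OF perm_in[OF \<pi> up_range[OF that p]] ne vn] by (simp add: delp_def)
  show "inj_on (delp n p v \<pi>) {1..n-1}"
  proof (rule inj_onI)
    fix x y assume "x \<in> {1..n-1}" "y \<in> {1..n-1}" "delp n p v \<pi> x = delp n p v \<pi> y"
    then have "dn v (\<pi> (up p x)) = dn v (\<pi> (up p y))" by (simp add: delp_def)
    then show "x = y" using dn_inj[OF ne ne] perm_inj[OF \<pi>] up_inj by metis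
  qed
qed (auto simp: delp_def)

lemma insp_perm:
  assumes \<sigma>: "\<sigma> permutes {1..n-1}" and p: "p \<in> {1..n}" and v: "v \<in> {1..n}"
  shows "insp n p v \<sigma> permutes {1..n}"
proof (rule endo_permutes)
  show "insp n p v \<sigma> x \<in> {1..n}" if "x \<in> {1..n}" for x
  proof (cases "x = p")
    case False
    then show ?thesis using that up_range[OF perm_in[OF \<sigma> dn_range[OF that False p]] v]
      by (simp add: insp_def)
  qed (use v that in \<open>simp add: insp_def\<close>)
  show "inj_on (insp n p v \<sigma>) {1..n}"
  proof (rule inj_onI)
    fix x y assume x: "x \<in> {1..n}" and y: "y \<in> {1..n}" and eq: "insp n p v \<sigma> x = insp n p v \<sigma> y"
    show "x = y"
    proof (cases "x = p"; cases "y = p")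
      assume "x \<noteq> p" "y \<noteq> p"
      then have "up v (\<sigma> (dn p x)) = up v (\<sigma> (dn p y))" using eq x y by (simp add: insp_def)
      then show "x = y" using \<open>x \<noteq> p\<close> \<open>y \<noteq> p\<close> dn_inj up_inj perm_inj[OF \<sigma>] by metis
    qed (use eq x y up_neq up_neq[symmetric] in \<open>auto simp: insp_def\<close>)
  qed
qed (auto simp: insp_def)

lemma delp_at: "x \<in> {1..n-1} \<Longrightarrow> delp n p v \<pi> x = dn v (\<pi> (up p x))"
  by (simp add: delp_def)
lemma insp_at: "x \<in> {1..n} \<Longrightarrow> x \<noteq> p \<Longrightarrow> insp n p v \<sigma> x = up v (\<sigma> (dn p x))"
  by (simp add: insp_def)
lemma insp_p: "p \<in> {1..n} \<Longrightarrow> insp n p v \<sigma> p = v"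
  by (simp add: insp_def)

lemma delp_insp:
  assumes \<sigma>: "\<sigma> permutes {1..n-1}" and p: "p \<in> {1..n}"
  shows "delp n p v (insp n p v \<sigma>) = \<sigma>"
proof
  fix x show "delp n p v (insp n p v \<sigma>) x = \<sigma> x"
  proof (cases "x \<in> {1..n-1}")
    case True
    then show ?thesis using up_range[OF True p] up_neq[of p x]
      by (simp add: delp_at insp_at dn_up)
  qed (auto simp: delp_def insp_def perm_out[OF \<sigma>])
qed

lemma insp_delp:
  assumes \<pi>: "\<pi> permutes {1..n}" and p: "p \<in> {1..n}" and v: "\<pi> p = v"
  shows "insp n p v (delp n p v \<pi>) = \<pi>"
proof
  fix x show "insp n p v (delp n p v \<pi>) x = \<pi> x"
  proof (cases "x \<in> {1..n}")
    case True
    show ?thesis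
    proof (cases "x = p")
      case False
      have "\<pi> x \<noteq> v" using perm_inj[OF \<pi>, of x p] v False by metis
      then show ?thesis using True False dn_range[OF True False p]
        by (simp add: delp_at insp_at up_dn)
    qed (use insp_p[OF p] v in simp)
  qed (auto simp: insp_def delp_def perm_out[OF \<pi>])
qed

lemma c_upd:
  assumes i: "i < length a" "1 \<le> a!i"
  shows "c (a[i := a!i - 1]) j = (if j \<le> i then c a j else c a j - 1)"
proof (cases "j \<le> i")
  case True then show ?thesis by simp
next
  case False
  have il: "i < length (take j a)" using False i by simp
  have "take j (a[i := a!i - 1]) = (take j a)[i := a!i - 1]" by (rule take_update_swap)
  then have "c (a[i := a!i - 1]) j = c a j + (a!i - 1) - (take j a)!i"
    using sum_list_update[OF il] by simp
  also have "(take j a)!i = a!i" using False by simp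
  finally show ?thesis using False i by simp
qed

lemma len_upd: "length (a[i := x]) = length a" by simp

lemma sum_upd:
  assumes i: "i < length (a::nat list)" "1 \<le> a!i"
  shows "sum_list (a[i := a!i - 1]) = sum_list a - 1"
  using c_upd[OF i, of "length a"] i by simp

lemma blkT:
  assumes i: "i < length a" "1 \<le> a!i" and p: "p \<in> blk a (Suc i)"
  shows "x \<in> blk (a[i := a!i - 1]) m \<longleftrightarrow> up p x \<in> blk a m"
proof (cases m)
  case 0 then show ?thesis by (simp add: blk_0)
next
  case (Suc m')
  have ci: "c a (Suc i) = c a i + a!i" using cS[where a=a and j=i] i by simp
  have pb: "c a i < p" "p \<le> c a (Suc i)" using p by (auto simp: blk_Suc)
  show ?thesis
  proof (cases m' i rule: linorder_cases)
    case less
    have "c a (Suc m') \<le> c a i" using less by (intro c_mono) simp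
    moreover have "c a m' \<le> c a (Suc m')" by (intro c_mono) simp
    ultimately show ?thesis using less pb Suc
      by (simp add: blk_Suc c_upd[OF i, simplified] up_def)
  next
    case equal
    then show ?thesis using pb Suc ci by (auto simp: blk_Suc c_upd[OF i, simplified] up_def)
  next
    case greater
    have "c a (Suc i) \<le> c a m'" using greater by (intro c_mono) simp
    moreover have "c a m' \<le> c a (Suc m')" by (intro c_mono) simp
    ultimately show ?thesis using greater pb Suc ci
      by (auto simp: blk_Suc c_upd[OF i, simplified] up_def)
  qed
qed

lemma blkT':
  assumes i: "i < length a" "1 \<le> a!i" and p: "p \<in> blk a (Suc i)" and x: "x \<noteq> p"
  shows "dn p x \<in> blk (a[i := a!i - 1]) m \<longleftrightarrow> x \<in> blk a m"
  using blkT[OF i p, of "dn p x" m] up_dn[OF x] by simp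

lemma sbT:
  assumes i: "i < length a" "1 \<le> a!i" and p: "p \<in> blk a (Suc i)"
  shows "same_block (a[i := a!i - 1]) x y \<longleftrightarrow> same_block a (up p x) (up p y)"
  unfolding same_block_def using blkT[OF i p] by simp

lemma sbT':
  assumes i: "i < length a" "1 \<le> a!i" and p: "p \<in> blk a (Suc i)" and x: "x \<noteq> p" "y \<noteq> p"
  shows "same_block (a[i := a!i - 1]) (dn p x) (dn p y) \<longleftrightarrow> same_block a x y"
  using sbT[OF i p, of "dn p x" "dn p y"] up_dn[OF x(1)] up_dn[OF x(2)] by simp

lemma delp_mono:
  assumes i: "i < length a" "1 \<le> a!i" and p: "p \<in> blk a (Suc i)"
    and \<pi>: "\<pi> \<in> S_a a" and v: "\<pi> p = v"
  shows "delp (sum_list a) p v \<pi> \<in> S_a (a[i := a!i - 1])"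
proof -
  let ?n = "sum_list a" let ?a' = "a[i := a!i - 1]"
  have \<pi>p: "\<pi> permutes {1..?n}" and \<pi>m: "\<forall>x y. x < y \<and> same_block a x y \<longrightarrow> \<pi> y < \<pi> x"
    using \<pi> by (auto simp: S_a_alt)
  have pn: "p \<in> {1..?n}" using blk_bound[OF p] .
  have sa: "sum_list ?a' = ?n - 1" using sum_upd[OF i] .
  have ne: "\<pi> (up p x) \<noteq> v" for x using perm_inj[OF \<pi>p, of "up p x" p] v up_neq by metis
  have "delp ?n p v \<pi> permutes {1..?n - 1}" using delp_perm[OF \<pi>p pn v] .
  moreover have "delp ?n p v \<pi> y < delp ?n p v \<pi> x" if xy: "x < y" "same_block ?a' x y" for x y
  proof -
    obtain m where "x \<in> blk ?a' m" "y \<in> blk ?a' m" using xy unfolding same_block_def by blast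
    then have xr: "x \<in> {1..?n-1}" and yr: "y \<in> {1..?n-1}" using blk_bound sa by metis+
    have "same_block a (up p x) (up p y)" using xy sbT[OF i p] by simp
    then have "\<pi> (up p y) < \<pi> (up p x)" using \<pi>m up_mono[OF xy(1)] by blast
    then show ?thesis using dn_mono[OF _ ne ne] by (simp add: delp_at[OF xr] delp_at[OF yr])
  qed
  ultimately show ?thesis unfolding S_a_alt using sa by auto
qed

lemma delp_fix:
  assumes \<pi>: "\<pi> permutes {1..n}" and p: "p \<in> {1..n}" and v: "\<pi> p = p" and t: "t \<in> {1..n-1}"
  shows "delp n p p \<pi> t = t \<longleftrightarrow> \<pi> (up p t) = up p t"
proof -
  have ne: "\<pi> (up p t) \<noteq> p" using perm_inj[OF \<pi>, of "up p t" p] v up_neq by metis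
  have "delp n p p \<pi> t = dn p (\<pi> (up p t))" using delp_at[OF t] .
  also have "\<dots> = t \<longleftrightarrow> \<pi> (up p t) = up p t"
    using up_eq_iff[OF ne, of t] up_dn[OF ne] dn_up[of p t] by metis
  finally show ?thesis .
qed

lemma insp_fix:
  assumes t: "t \<in> {1..n}" "t \<noteq> p"
  shows "insp n p p \<sigma> t = t \<longleftrightarrow> \<sigma> (dn p t) = dn p t"
  using insp_at[OF t] up_eq_iff[OF t(2)] by simp

lemma fix_unique:
  assumes \<pi>: "\<pi> \<in> S_a a" and m: "m \<in> {1..length a}" and pq: "p \<in> blk a m" "q \<in> blk a m"
    and f: "\<pi> p = p" "\<pi> q = q"
  shows "p = q"
proof (rule ccontr)
  have \<pi>m: "\<forall>x y. x < y \<and> same_block a x y \<longrightarrow> \<pi> y < \<pi> x" using \<pi> by (auto simp: S_a_alt)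
  assume "p \<noteq> q"
  then consider "p < q" | "q < p" by linarith
  then show False
  proof cases
    case 1
    have "same_block a p q" using m pq unfolding same_block_def by blast
    then show False using \<pi>m 1 f by fastforce
  next
    case 2
    have "same_block a q p" using m pq unfolding same_block_def by blast
    then show False using \<pi>m 2 f by fastforce
  qed
qed

lemma K0a: "sum_list a = 0 \<Longrightarrow> card (S_a a) = 1"
proof -
  assume a0: "sum_list a = 0"
  have "S_a a = {id}"
  proof (intro equalityI subsetI)
    fix \<pi> assume "\<pi> \<in> S_a a"
    then have "\<pi> permutes {}" using a0 by (simp add: S_a_def)
    then show "\<pi> \<in> {id}" by (simp add: permutes_empty)
  next
    fix \<pi> :: "nat \<Rightarrow> nat" assume "\<pi> \<in> {id}"
    moreover have "\<not> same_block a x y" for x y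
      using blk_bound[where a=a and x=x] a0 unfolding same_block_def by auto
    ultimately show "\<pi> \<in> S_a a" using a0 by (simp add: S_a_alt permutes_id)
  qed
  then show ?thesis by simp
qed

lemma insp_mono_first:
  assumes i: "i < length a" "1 \<le> a!i" and p: "p = c a i + 1"
    and \<sigma>: "\<sigma> \<in> S_a (a[i := a!i - 1])"
  shows "insp (sum_list a) p (sum_list a) \<sigma> \<in> S_a a"
proof -
  let ?n = "sum_list a" let ?a' = "a[i := a!i - 1]" let ?\<pi> = "insp ?n p ?n \<sigma>"
  have pb: "p \<in> blk a (Suc i)" using p i cS[where a=a and j=i] by (simp add: blk_Suc)
  have pn: "p \<in> {1..?n}" using blk_bound[OF pb] .
  have sa: "sum_list ?a' = ?n - 1" using sum_upd[OF i] .
  have \<sigma>p: "\<sigma> permutes {1..?n - 1}" and \<sigma>m: "\<forall>x y. x < y \<and> same_block ?a' x y \<longrightarrow> \<sigma> y < \<sigma> x"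
    using \<sigma> sa by (auto simp: S_a_alt)
  have nn: "?n \<in> {1..?n}" using pn by auto
  have "?\<pi> permutes {1..?n}" using insp_perm[OF \<sigma>p pn nn] .
  moreover have "?\<pi> y < ?\<pi> x" if xy: "x < y" "same_block a x y" for x y
  proof -
    obtain m where m: "m \<in> {1..length a}" "x \<in> blk a m" "y \<in> blk a m" using xy unfolding same_block_def by blast
    then have xr: "x \<in> {1..?n}" and yr: "y \<in> {1..?n}" using blk_bound by metis+
    have yp: "y \<noteq> p"
    proof
      assume "y = p"
      then have "m = Suc i" using blk_disj m pb by metis
      then show False using m xy \<open>y = p\<close> p by (simp add: blk_Suc)
    qed
    have sy: "\<sigma> (dn p y) \<in> {1..?n-1}" using perm_in[OF \<sigma>p dn_range[OF yr yp pn]] .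
    show ?thesis
    proof (cases "x = p")
      case True
      have "\<sigma> (dn p y) < ?n" using sy pn by auto
      then show ?thesis using True insp_at[OF yr yp] insp_p[OF pn] by (simp add: up_def)
    next
      case False
      have "same_block ?a' (dn p x) (dn p y)" using sbT'[OF i pb False yp] xy by simp
      moreover have "dn p x < dn p y" using dn_mono[OF xy(1) False yp] .
      ultimately have "\<sigma> (dn p y) < \<sigma> (dn p x)" using \<sigma>m by blast
      then show ?thesis using insp_at[OF yr yp] insp_at[OF xr False] up_mono by simp
    qed
  qed
  ultimately show ?thesis unfolding S_a_alt by auto
qed

lemma K0b:
  assumes n0: "sum_list a \<noteq> 0"
  shows "card (S_a a) = (\<Sum>i\<in>{i. i < length a \<and> 1 \<le> a!i}. card (S_a (a[i := a!i - 1])))"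
proof -
  let ?n = "sum_list a"
  let ?I = "{i. i < length a \<and> 1 \<le> a!i}"
  define P where "P i = {\<pi> \<in> S_a a. \<pi> (c a i + 1) = ?n}" for i
  have pos: "c a i + 1 \<in> blk a (Suc i)" "c a i + 1 \<in> {1..?n}" if "i \<in> ?I" for i
  proof -
    show "c a i + 1 \<in> blk a (Suc i)" using that cS[where a=a and j=i] by (simp add: blk_Suc)
    then show "c a i + 1 \<in> {1..?n}" by (rule blk_bound)
  qed
  have cover: "S_a a = (\<Union>i\<in>?I. P i)"
  proof (intro equalityI subsetI)
    fix \<pi> assume \<pi>: "\<pi> \<in> S_a a"
    have \<pi>p: "\<pi> permutes {1..?n}" and \<pi>m: "\<forall>x y. x < y \<and> same_block a x y \<longrightarrow> \<pi> y < \<pi> x"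
      using \<pi> by (auto simp: S_a_alt)
    have "1 \<le> ?n" using n0 by linarith
    then have "?n \<in> {1..?n}" by simp
    then have "?n \<in> \<pi> ` {1..?n}" using permutes_image[OF \<pi>p] by simp
    then obtain p where p: "p \<in> {1..?n}" "\<pi> p = ?n" by auto
    obtain i where i: "i < length a" "p \<in> blk a (Suc i)" using blk_cover[OF p(1)] by blast
    have "p = c a i + 1"
    proof (rule ccontr)
      assume "p \<noteq> c a i + 1"
      then have q: "p - 1 \<in> blk a (Suc i)" using i by (auto simp: blk_Suc)
      then have "same_block a (p - 1) p" using i unfolding same_block_def by force
      moreover have "p - 1 < p" using p by auto
      ultimately have "?n < \<pi> (p - 1)" using \<pi>m p by force
      moreover have "\<pi> (p - 1) \<in> {1..?n}" using perm_in[OF \<pi>p blk_bound[OF q]] .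
      ultimately show False by simp
    qed
    moreover have "1 \<le> a!i" using i cS[where a=a and j=i] by (auto simp: blk_Suc)
    ultimately show "\<pi> \<in> (\<Union>i\<in>?I. P i)" using i p \<pi> unfolding P_def by auto
  qed (auto simp: P_def)
  have disj: "P i \<inter> P i' = {}" if "i \<in> ?I" "i' \<in> ?I" "i \<noteq> i'" for i i'
  proof -
    have "c a i \<noteq> c a i'"
    proof
      assume eq: "c a i = c a i'"
      { fix i i' assume "i \<in> ?I" "i < i'"
        then have "c a i < c a i'" using c_mono[where a=a and j="Suc i" and j'=i'] cS[where a=a and j=i] by auto }
      then show False using that eq by (metis linorder_neqE_nat less_irrefl)
    qed
    show ?thesis
    proof (rule ccontr)
      assume "P i \<inter> P i' \<noteq> {}"
      then obtain \<pi> where pp: "\<pi> \<in> S_a a" "\<pi> (c a i + 1) = ?n" "\<pi> (c a i' + 1) = ?n"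
        unfolding P_def by auto
      have "\<pi> permutes {1..?n}" using pp(1) by (simp add: S_a_def)
      from perm_inj[OF this, of "c a i + 1" "c a i' + 1"] pp(2,3)
      have "c a i + 1 = c a i' + 1" by simp
      then show False using \<open>c a i \<noteq> c a i'\<close> by simp
    qed
  qed
  have cardP: "card (P i) = card (S_a (a[i := a!i - 1]))" if iI: "i \<in> ?I" for i
  proof -
    let ?p = "c a i + 1"
    have i: "i < length a" "1 \<le> a!i" using iI by auto
    have sa: "sum_list (a[i := a!i - 1]) = ?n - 1" using sum_upd[OF i] .
    show ?thesis
    proof (rule bij_betw_same_card[OF bij_betw_byWitness[where f = "delp ?n ?p ?n" and f' = "insp ?n ?p ?n"]])
      show "\<forall>\<pi>\<in>P i. insp ?n ?p ?n (delp ?n ?p ?n \<pi>) = \<pi>"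
        using insp_delp pos[OF iI] unfolding P_def S_a_def by blast
      show "\<forall>\<sigma>\<in>S_a (a[i := a!i - 1]). delp ?n ?p ?n (insp ?n ?p ?n \<sigma>) = \<sigma>"
        using delp_insp pos[OF iI] sa unfolding S_a_def by auto
      show "delp ?n ?p ?n ` P i \<subseteq> S_a (a[i := a!i - 1])"
        using delp_mono[OF i pos(1)[OF iI]] unfolding P_def by blast
      show "insp ?n ?p ?n ` S_a (a[i := a!i - 1]) \<subseteq> P i"
        using insp_mono_first[OF i refl] insp_p[OF pos(2)[OF iI]] unfolding P_def by blast
    qed
  qed
  have "card (S_a a) = (\<Sum>i\<in>?I. card (P i))"
    unfolding cover by (rule card_UN_disjoint) (use disj finite_S in \<open>auto simp: P_def\<close>)
  also have "\<dots> = (\<Sum>i\<in>?I. card (S_a (a[i := a!i - 1])))"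
    using cardP by simp
  finally show ?thesis .
qed

definition cond :: "nat list \<Rightarrow> nat \<Rightarrow> nat \<Rightarrow> (nat \<Rightarrow> nat) \<Rightarrow> bool" where
  "cond a' m p \<sigma> \<longleftrightarrow> (\<forall>x \<in> blk a' (Suc m). (x < p \<longrightarrow> p \<le> \<sigma> x) \<and> (p \<le> x \<longrightarrow> \<sigma> x < p))"

lemma S_perm: "\<pi> \<in> S_a a \<Longrightarrow> \<pi> permutes {1..sum_list a}"
  by (simp add: S_a_def)
lemma S_mono: "\<pi> \<in> S_a a \<Longrightarrow> x < y \<Longrightarrow> same_block a x y \<Longrightarrow> \<pi> y < \<pi> x"
  by (auto simp: S_a_alt)

lemma insp_mono_cond:
  assumes i: "m < length a" "1 \<le> a!m" and pb: "p \<in> blk a (Suc m)"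
    and \<sigma>: "\<sigma> \<in> S_a (a[m := a!m - 1])" and cd: "cond (a[m := a!m - 1]) m p \<sigma>"
  shows "insp (sum_list a) p p \<sigma> \<in> S_a a"
proof -
  let ?n = "sum_list a" let ?a' = "a[m := a!m - 1]" let ?\<pi> = "insp ?n p p \<sigma>"
  have pn: "p \<in> {1..?n}" using blk_bound[OF pb] .
  have sa: "sum_list ?a' = ?n - 1" using sum_upd[OF i] .
  have \<sigma>p: "\<sigma> permutes {1..?n - 1}" using S_perm[OF \<sigma>] sa by simp
  have "?\<pi> permutes {1..?n}" using insp_perm[OF \<sigma>p pn pn] .
  moreover have "?\<pi> y < ?\<pi> x" if xy: "x < y" "same_block a x y" for x y
  proof -
    obtain m' where m': "m' \<in> {1..length a}" "x \<in> blk a m'" "y \<in> blk a m'" using xy unfolding same_block_def by blast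
    then have xr: "x \<in> {1..?n}" and yr: "y \<in> {1..?n}" using blk_bound by metis+
    consider "x = p" | "y = p" | "x \<noteq> p" "y \<noteq> p" by blast
    then show ?thesis
    proof cases
      case 1
      then have yp: "y \<noteq> p" using xy by simp
      have "m' = Suc m" using blk_disj m' pb 1 by metis
      then have "dn p y \<in> blk ?a' (Suc m)" using blkT'[OF i pb yp] m' by simp
      moreover have "p \<le> dn p y" using xy 1 by (auto simp: dn_def)
      ultimately have "\<sigma> (dn p y) < p" using cd unfolding cond_def by blast
      then show ?thesis using 1 insp_at[OF yr yp] insp_p[OF pn] by (simp add: up_def)
    next
      case 2
      then have xp: "x \<noteq> p" using xy by simp
      have "m' = Suc m" using blk_disj m' pb 2 by metis
      then have "dn p x \<in> blk ?a' (Suc m)" using blkT'[OF i pb xp] m' by simp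
      moreover have "dn p x < p" using xy 2 by (auto simp: dn_def)
      ultimately have "p \<le> \<sigma> (dn p x)" using cd unfolding cond_def by blast
      then show ?thesis using 2 insp_at[OF xr xp] insp_p[OF pn] by (simp add: up_def)
    next
      case 3
      have "same_block ?a' (dn p x) (dn p y)" using sbT'[OF i pb 3] xy by simp
      moreover have "dn p x < dn p y" using dn_mono[OF xy(1) 3] .
      ultimately have "\<sigma> (dn p y) < \<sigma> (dn p x)" using S_mono[OF \<sigma>] by blast
      then show ?thesis using insp_at[OF yr 3(2)] insp_at[OF xr 3(1)] up_mono by simp
    qed
  qed
  ultimately show ?thesis unfolding S_a_alt by auto
qed

lemma EQ:
  assumes i: "m < length a" "1 \<le> a!m" and pb: "p \<in> blk a (Suc m)"
  shows "card {\<pi> \<in> D_a m a. \<pi> p = p} = card {\<sigma> \<in> D_a (Suc m) (a[m := a!m - 1]). cond (a[m := a!m - 1]) m p \<sigma>}"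
proof -
  let ?n = "sum_list a" let ?a' = "a[m := a!m - 1]"
  let ?E = "{\<pi> \<in> D_a m a. \<pi> p = p}" let ?Q = "{\<sigma> \<in> D_a (Suc m) ?a'. cond ?a' m p \<sigma>}"
  have pn: "p \<in> {1..?n}" using blk_bound[OF pb] .
  have sa: "sum_list ?a' = ?n - 1" using sum_upd[OF i] .
  have la: "length ?a' = length a" by simp
  have mS: "Suc m \<in> {1..length a}" using i by simp
  show ?thesis
  proof (rule bij_betw_same_card[OF bij_betw_byWitness[where f = "delp ?n p p" and f' = "insp ?n p p"]])
    show "\<forall>\<pi>\<in>?E. insp ?n p p (delp ?n p p \<pi>) = \<pi>"
      using insp_delp pn unfolding D_a_def S_a_def by blast
    show "\<forall>\<sigma>\<in>?Q. delp ?n p p (insp ?n p p \<sigma>) = \<sigma>"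
      using delp_insp pn sa unfolding D_a_def S_a_def by auto
    show "delp ?n p p ` ?E \<subseteq> ?Q"
    proof (rule image_subsetI)
      fix \<pi> assume \<pi>E: "\<pi> \<in> ?E"
      then have \<pi>S: "\<pi> \<in> S_a a" and \<pi>f: "\<pi> p = p"
        and \<pi>D: "\<And>t m'. m' \<in> {1..m} \<Longrightarrow> t \<in> blk a m' \<Longrightarrow> \<pi> t \<noteq> t"
        unfolding D_a_def by auto
      have \<pi>p: "\<pi> permutes {1..?n}" using S_perm[OF \<pi>S] .
      let ?\<sigma> = "delp ?n p p \<pi>"
      have \<sigma>S: "?\<sigma> \<in> S_a ?a'" using delp_mono[OF i pb \<pi>S \<pi>f] .
      have nf: "?\<sigma> t \<noteq> t" if "m' \<in> {1..Suc m}" "t \<in> blk ?a' m'" for t m'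
      proof -
        have tr: "t \<in> {1..?n-1}" using blk_bound[OF that(2)] sa by simp
        have ub: "up p t \<in> blk a m'" using blkT[OF i pb] that(2) by simp
        have "\<pi> (up p t) \<noteq> up p t"
        proof (cases "m' = Suc m")
          case True
          show ?thesis
          proof
            assume "\<pi> (up p t) = up p t"
            then have "up p t = p" using fix_unique[OF \<pi>S mS _ pb _ \<pi>f] ub True by blast
            then show False using up_neq by metis
          qed
        next
          case False then show ?thesis using \<pi>D[OF _ ub] that(1) by simp
        qed
        then show ?thesis using delp_fix[OF \<pi>p pn \<pi>f tr] by simp
      qed
      have cd: "cond ?a' m p ?\<sigma>" unfolding cond_def
      proof (intro ballI conjI impI)
        fix x assume xb: "x \<in> blk ?a' (Suc m)"
        have xr: "x \<in> {1..?n-1}" using blk_bound[OF xb] sa by simp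
        have ub: "up p x \<in> blk a (Suc m)" using blkT[OF i pb] xb by simp
        {
          assume "x < p"
          then have ux: "up p x = x" by (simp add: up_def)
          have "same_block a x p" using ub ux pb mS unfolding same_block_def by auto
          then have "p < \<pi> x" using S_mono[OF \<pi>S \<open>x < p\<close>] \<pi>f by simp
          then show "p \<le> ?\<sigma> x" using delp_at[OF xr] ux by (simp add: dn_def)
        next
          assume "p \<le> x"
          then have ux: "up p x = Suc x" by (simp add: up_def)
          have "same_block a p (Suc x)" using ub ux pb mS unfolding same_block_def by auto
          then have "\<pi> (Suc x) < p" using S_mono[OF \<pi>S, of p "Suc x"] \<open>p \<le> x\<close> \<pi>f by simp
          then show "?\<sigma> x < p" using delp_at[OF xr] ux by (simp add: dn_def)
        }
      qed
      show "?\<sigma> \<in> ?Q" using \<sigma>S nf cd unfolding D_a_def by blast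
    qed
    show "insp ?n p p ` ?Q \<subseteq> ?E"
    proof (rule image_subsetI)
      fix \<sigma> assume \<sigma>Q: "\<sigma> \<in> ?Q"
      then have \<sigma>S: "\<sigma> \<in> S_a ?a'" and cd: "cond ?a' m p \<sigma>"
        and \<sigma>D: "\<And>t m'. m' \<in> {1..Suc m} \<Longrightarrow> t \<in> blk ?a' m' \<Longrightarrow> \<sigma> t \<noteq> t"
        unfolding D_a_def by auto
      let ?\<pi> = "insp ?n p p \<sigma>"
      have \<pi>S: "?\<pi> \<in> S_a a" using insp_mono_cond[OF i pb \<sigma>S cd] .
      have nf: "?\<pi> t \<noteq> t" if "m' \<in> {1..m}" "t \<in> blk a m'" for t m'
      proof -
        have tr: "t \<in> {1..?n}" using blk_bound[OF that(2)] .
        have tp: "t \<noteq> p" using blk_disj[OF that(2)] pb that(1) by force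
        have "dn p t \<in> blk ?a' m'" using blkT'[OF i pb tp] that(2) by simp
        moreover have "m' \<in> {1..Suc m}" using that(1) by simp
        ultimately have "\<sigma> (dn p t) \<noteq> dn p t" using \<sigma>D by blast
        then show ?thesis using insp_fix[OF tr tp] by simp
      qed
      show "?\<pi> \<in> ?E" using \<pi>S nf insp_p[OF pn] unfolding D_a_def by blast
    qed
  qed
qed

lemma blk'_eq:
  assumes i: "m < length a" "1 \<le> a!m"
  shows "blk (a[m := a!m - 1]) (Suc m) = {c a m + 1 .. c a m + a!m - 1}"
  using c_upd[OF i, where j=m] c_upd[OF i, where j="Suc m"] cS[where a=a and j=m] i
  by (simp add: blk_Suc)

lemma blk_eq:
  assumes i: "m < length a"
  shows "blk a (Suc m) = {c a m + 1 .. c a m + a!m}"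
  using cS[where a=a and j=m] i by (simp add: blk_Suc)

lemma Q_cover:
  assumes i: "m < length a" "1 \<le> a!m" and \<sigma>: "\<sigma> \<in> D_a (Suc m) (a[m := a!m - 1])"
  shows "\<exists>p\<in>blk a (Suc m). cond (a[m := a!m - 1]) m p \<sigma>"
proof -
  let ?a' = "a[m := a!m - 1]" let ?B' = "blk ?a' (Suc m)"
  have B': "?B' = {c a m + 1 .. c a m + a!m - 1}" using blk'_eq[OF i] .
  have B: "blk a (Suc m) = {c a m + 1 .. c a m + a!m}" using blk_eq[OF i(1)] .
  have \<sigma>S: "\<sigma> \<in> S_a ?a'" using \<sigma> unfolding D_a_def by simp
  have nf: "\<sigma> x \<noteq> x" if "x \<in> ?B'" for x
    using \<sigma> that unfolding D_a_def by fastforce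
  have mono: "\<sigma> y < \<sigma> x" if "x \<in> ?B'" "y \<in> ?B'" "x < y" for x y
  proof -
    have "same_block ?a' x y" using that i unfolding same_block_def by (intro bexI[of _ "Suc m"]) auto
    then show ?thesis using S_mono[OF \<sigma>S that(3)] by simp
  qed
  define P where "P x \<longleftrightarrow> x \<in> ?B' \<and> \<sigma> x < x" for x
  define p where "p = (if \<exists>x. P x then (LEAST x. P x) else c a m + a!m)"
  have K: "x < \<sigma> x" if "x \<in> ?B'" "x < p" for x
  proof -
    have "\<not> P x"
    proof (cases "\<exists>x. P x")
      case True then show ?thesis using not_less_Least[of x P] that(2) unfolding p_def by simp
    next
      case False then show ?thesis by simp
    qed
    then show ?thesis using that(1) nf[OF that(1)] unfolding P_def by simp
  qed
  have pB: "p \<in> blk a (Suc m)"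
  proof (cases "\<exists>x. P x")
    case True
    then have "P p" unfolding p_def using LeastI_ex[of P] by simp
    then show ?thesis unfolding P_def B' B by auto
  next
    case False
    then have "p = c a m + a!m" by (simp only: p_def if_not_P[OF False] if_False)
    then show ?thesis unfolding B using i by simp
  qed
  have "cond ?a' m p \<sigma>" unfolding cond_def
  proof (intro ballI conjI impI)
    fix x assume xb: "x \<in> ?B'"
    {
      assume xp: "x < p"
      have pm1: "p - 1 \<in> ?B'" using xb xp pB unfolding B B' by auto
      have "p - 1 < \<sigma> (p - 1)" using K[OF pm1] xp by simp
      moreover have "\<sigma> (p - 1) \<le> \<sigma> x"
      proof (cases "x = p - 1")
        case False
        then have "x < p - 1" using xp by linarith
        then show ?thesis using mono[OF xb pm1] by simp
      qed simp
      ultimately show "p \<le> \<sigma> x" by simp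
    next
      assume xp: "p \<le> x"
      show "\<sigma> x < p"
      proof (cases "\<exists>x. P x")
        case True
        then have "P p" unfolding p_def using LeastI_ex[of P] by simp
        then have pb': "p \<in> ?B'" "\<sigma> p < p" unfolding P_def by auto
        show ?thesis
        proof (cases "x = p")
          case False then show ?thesis using mono[OF pb'(1) xb] xp pb'(2) by simp
        qed (use pb' in simp)
      next
        case False
        then have "p = c a m + a!m" by (simp only: p_def if_not_P[OF False] if_False)
        then show ?thesis using xb xp unfolding B' by auto
      qed
    }
  qed
  then show ?thesis using pB by blast
qed

lemma Q_disj:
  assumes i: "m < length a" "1 \<le> a!m" and p: "p \<in> blk a (Suc m)" and q: "q \<in> blk a (Suc m)"
    and cp: "cond (a[m := a!m - 1]) m p \<sigma>" and cq: "cond (a[m := a!m - 1]) m q \<sigma>"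
  shows "p = q"
proof (rule ccontr)
  have B': "blk (a[m := a!m - 1]) (Suc m) = {c a m + 1 .. c a m + a!m - 1}" using blk'_eq[OF i] .
  have B: "blk a (Suc m) = {c a m + 1 .. c a m + a!m}" using blk_eq[OF i(1)] .
  { fix p q assume p: "p \<in> blk a (Suc m)" and q: "q \<in> blk a (Suc m)"
      and cp: "cond (a[m := a!m - 1]) m p \<sigma>" and cq: "cond (a[m := a!m - 1]) m q \<sigma>" and pq: "p < q"
    have pb': "p \<in> blk (a[m := a!m - 1]) (Suc m)" using p q pq unfolding B B' by auto
    have "\<sigma> p < p" using cp pb' unfolding cond_def by blast
    moreover have "q \<le> \<sigma> p" using cq pb' pq unfolding cond_def by blast
    ultimately have False using pq by simp }
  moreover assume "p \<noteq> q"
  ultimately show False using p q cp cq by (metis linorder_neqE_nat)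
qed

lemma K1:
  assumes m: "m < length a"
  shows "card (D_a m a) = card (D_a (Suc m) a) + (if 1 \<le> a!m then card (D_a (Suc m) (a[m := a!m - 1])) else 0)"
proof -
  let ?B = "blk a (Suc m)"
  have U: "{1..Suc m} = insert (Suc m) {1..m}" by auto
  have DS: "D_a (Suc m) a = {\<pi> \<in> D_a m a. \<forall>x\<in>?B. \<pi> x \<noteq> x}"
    unfolding D_a_def U by auto
  show ?thesis
  proof (cases "1 \<le> a!m")
    case False
    then have "?B = {}" using blk_eq[OF m] by simp
    then show ?thesis using False DS by simp
  next
    case True
    have i: "m < length a" "1 \<le> a!m" using m True by auto
    let ?a' = "a[m := a!m - 1]"
    define E where "E p = {\<pi> \<in> D_a m a. \<pi> p = p}" for p
    define Q where "Q p = {\<sigma> \<in> D_a (Suc m) ?a'. cond ?a' m p \<sigma>}" for p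
    define F where "F = {\<pi> \<in> D_a m a. \<exists>p\<in>?B. \<pi> p = p}"
    have fB: "finite ?B" by (simp add: blk_def)
    have mS: "Suc m \<in> {1..length a}" using m by simp
    have "D_a m a = D_a (Suc m) a \<union> F" unfolding DS F_def by auto
    moreover have "D_a (Suc m) a \<inter> F = {}" unfolding DS F_def by auto
    ultimately have c1: "card (D_a m a) = card (D_a (Suc m) a) + card F"
      using finite_D[of m a] by (metis card_Un_disjoint finite_Un)
    have "F = (\<Union>p\<in>?B. E p)" unfolding F_def E_def by auto
    moreover have "E p \<inter> E q = {}" if "p \<in> ?B" "q \<in> ?B" "p \<noteq> q" for p q
      using fix_unique[OF _ mS that(1,2)] that(3) unfolding E_def D_a_def by blast
    ultimately have c2: "card F = (\<Sum>p\<in>?B. card (E p))"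
      using fB by (simp add: card_UN_disjoint finite_D E_def)
    have QU: "D_a (Suc m) ?a' = (\<Union>p\<in>?B. Q p)" unfolding Q_def using Q_cover[OF i] by auto
    have Qd: "Q p \<inter> Q q = {}" if "p \<in> ?B" "q \<in> ?B" "p \<noteq> q" for p q
      using Q_disj[OF i that(1,2)] that(3) unfolding Q_def by blast
    have c3: "card (D_a (Suc m) ?a') = (\<Sum>p\<in>?B. card (Q p))"
      unfolding QU
    proof (rule card_UN_disjoint[OF fB])
      show "\<forall>p\<in>?B. finite (Q p)" unfolding Q_def using finite_D by simp
      show "\<forall>p\<in>?B. \<forall>q\<in>?B. p \<noteq> q \<longrightarrow> Q p \<inter> Q q = {}" using Qd by blast
    qed
    have "(\<Sum>p\<in>?B. card (E p)) = (\<Sum>p\<in>?B. card (Q p))"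
      unfolding E_def Q_def using EQ[OF i] by simp
    then show ?thesis using c1 c2 c3 True by simp
  qed
qed



definition L :: "nat \<Rightarrow> mser \<Rightarrow> mser" where
  "L i h = (\<lambda>e. if finite {i. e i \<noteq> 0} then h e + (if 1 \<le> e i then h (e(i := e i - 1)) else 0) else 0)"

lemma finite_below:
  assumes "finite {i. e i \<noteq> 0}"
  shows "finite {d::nat\<Rightarrow>nat. \<forall>i. d i \<le> e i}"
proof -
  let ?S = "{i. e i \<noteq> 0}"
  have "inj_on (\<lambda>d. restrict d ?S) {d. \<forall>i. d i \<le> e i}"
  proof (rule inj_onI)
    fix x y assume x: "x \<in> {d. \<forall>i. d i \<le> e i}" and y: "y \<in> {d. \<forall>i. d i \<le> e i}"
      and eq: "restrict x ?S = restrict y ?S"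
    show "x = y"
    proof
      fix i show "x i = y i"
      proof (cases "i \<in> ?S")
        case True then show ?thesis using fun_cong[OF eq, of i] by simp
      next
        case False
        have "x i \<le> e i" "y i \<le> e i" using x y by auto
        then show ?thesis using False by simp
      qed
    qed
  qed
  moreover have "(\<lambda>d. restrict d ?S) ` {d. \<forall>i. d i \<le> e i} \<subseteq> PiE ?S (\<lambda>i. {0..e i})"
  proof (rule image_subsetI)
    fix d assume "d \<in> {d. \<forall>i. d i \<le> e i}"
    then show "restrict d ?S \<in> PiE ?S (\<lambda>i. {0..e i})"
      by (subst restrict_PiE_iff) auto
  qed
  moreover have "finite (PiE ?S (\<lambda>i. {0..e i}))"
    using assms by (intro finite_PiE) auto
  ultimately show ?thesis using inj_on_finite by blast
qed

lemma infinite_below: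
  assumes "infinite {i. e i \<noteq> 0}"
  shows "infinite {d::nat\<Rightarrow>nat. \<forall>i. d i \<le> e i}"
proof
  assume f: "finite {d::nat\<Rightarrow>nat. \<forall>i. d i \<le> e i}"
  have "(\<lambda>i. (\<lambda>_. 0::nat)(i := 1)) ` {i. e i \<noteq> 0} \<subseteq> {d::nat\<Rightarrow>nat. \<forall>i. d i \<le> e i}"
    by auto
  moreover have "inj (\<lambda>i. (\<lambda>_. 0::nat)(i := 1))"
  proof (rule injI)
    fix x y assume "(\<lambda>_. 0::nat)(x := 1) = (\<lambda>_. 0::nat)(y := 1)"
    from fun_cong[OF this, of x] show "x = y" by (auto split: if_splits)
  qed
  ultimately have "finite ((\<lambda>i. (\<lambda>_. 0::nat)(i := 1)) ` {i. e i \<noteq> 0})"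
    using f finite_subset by blast
  then have "finite {i. e i \<noteq> 0}"
    using finite_imageD inj_on_subset[OF \<open>inj _\<close> subset_UNIV] by blast
  then show False using assms by simp
qed

lemma ms_mult_inf: "infinite {i. e i \<noteq> 0} \<Longrightarrow> ms_mult f g e = 0"
  unfolding ms_mult_def using infinite_below[of e] by (intro sum.infinite) simp

lemma fin_sub: "finite {i. e i \<noteq> 0} \<Longrightarrow> finite {i. (e i - d i::nat) \<noteq> 0}"
  by (rule finite_subset[of _ "{i. e i \<noteq> 0}"]) auto

lemma fin_upd: "finite {i. e i \<noteq> 0} \<Longrightarrow> finite {i. (e(j := x::nat)) i \<noteq> 0}"
  by (rule finite_subset[of _ "insert j {i. e i \<noteq> 0}"]) auto

lemma lemA: "ms_mult (one_plus_var i) h = L i h"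
proof
  fix e
  show "ms_mult (one_plus_var i) h e = L i h e"
  proof (cases "finite {i. e i \<noteq> 0}")
    case False then show ?thesis by (simp add: ms_mult_inf L_def)
  next
    case True
    let ?D = "{d::nat\<Rightarrow>nat. \<forall>i. d i \<le> e i}"
    let ?z = "(\<lambda>_. 0::nat)" let ?d = "(\<lambda>_. 0::nat)(i := 1)"
    have 1: "(\<lambda>i'. e i' - ?d i') = e(i := e i - 1)" by auto
    have nz: "?d \<noteq> ?z" by (metis fun_upd_same zero_neq_one)
    have 2: "(\<lambda>i'. e i' - ?z i') = e" by simp
    have "ms_mult (one_plus_var i) h e = (\<Sum>d\<in>?D. (if d = ?z then h e else 0) + (if d = ?d then h (e(i := e i - 1)) else 0))"
      unfolding ms_mult_def one_plus_var_def ms_one_def ms_var_def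
    proof (intro sum.cong refl)
      fix d assume "d \<in> ?D"
      show "((if d = ?z then 1 else 0) + (if d = ?d then 1 else 0)) * h (\<lambda>i'. e i' - d i') =
         (if d = ?z then h e else 0) + (if d = ?d then h (e(i := e i - 1)) else 0)"
      proof (cases "d = ?z")
        case True then show ?thesis using nz 2 by simp
      next
        case False
        then show ?thesis using 1 by (cases "d = ?d") simp_all
      qed
    qed
    also have "\<dots> = h e + (if 1 \<le> e i then h (e(i := e i - 1)) else 0)"
      by (simp add: sum.distrib finite_below[OF True])
    finally show ?thesis using True by (simp add: L_def)
  qed
qed

lemma lemB2: "ms_mult B (L i H) = L i (ms_mult B H)"
proof
  fix e
  show "ms_mult B (L i H) e = L i (ms_mult B H) e"
  proof (cases "finite {i. e i \<noteq> 0}")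
    case False then show ?thesis by (simp add: ms_mult_inf L_def)
  next
    case True
    let ?D = "{d::nat\<Rightarrow>nat. \<forall>i. d i \<le> e i}"
    let ?e' = "e(i := e i - 1)"
    let ?D' = "{d::nat\<Rightarrow>nat. \<forall>j. d j \<le> ?e' j}"
    have fD: "finite ?D" using finite_below[OF True] .
    have eq1: "(\<lambda>j. e j - d j)(i := e i - d i - 1) = (\<lambda>j. ?e' j - d j)" for d :: "nat \<Rightarrow> nat"
      by (rule ext) simp
    have "ms_mult B (L i H) e = (\<Sum>d\<in>?D. B d * H (\<lambda>j. e j - d j) +
        (if 1 \<le> e i - d i then B d * H (\<lambda>j. ?e' j - d j) else 0))"
      unfolding ms_mult_def
    proof (intro sum.cong refl)
      fix d assume "d \<in> ?D"
      have "finite {j. e j - d j \<noteq> 0}" using fin_sub[OF True] .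
      then show "B d * L i H (\<lambda>j. e j - d j) = B d * H (\<lambda>j. e j - d j) +
        (if 1 \<le> e i - d i then B d * H (\<lambda>j. ?e' j - d j) else 0)"
        unfolding L_def using eq1[of d] by (simp add: algebra_simps)
    qed
    also have "\<dots> = ms_mult B H e + (\<Sum>d\<in>{d\<in>?D. 1 \<le> e i - d i}. B d * H (\<lambda>j. ?e' j - d j))"
      unfolding ms_mult_def by (simp only: sum.distrib sum.inter_filter[OF fD])
    also have "(\<Sum>d\<in>{d\<in>?D. 1 \<le> e i - d i}. B d * H (\<lambda>j. ?e' j - d j)) =
        (if 1 \<le> e i then ms_mult B H ?e' else 0)"
    proof (cases "1 \<le> e i")
      case True
      have "{d\<in>?D. 1 \<le> e i - d i} = ?D'"
      proof (intro set_eqI iffI)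
        fix d assume "d \<in> {d\<in>?D. 1 \<le> e i - d i}"
        then show "d \<in> ?D'" by auto
      next
        fix d assume d: "d \<in> ?D'"
        have "\<forall>j. d j \<le> e j"
        proof
          fix j show "d j \<le> e j" using d by (cases "j = i") (auto dest: spec[of _ j])
        qed
        moreover have "1 \<le> e i - d i" using d True by (auto dest: spec[of _ i])
        ultimately show "d \<in> {d\<in>?D. 1 \<le> e i - d i}" by simp
      qed
      then show ?thesis using True unfolding ms_mult_def by simp
    next
      case False
      then have "{d\<in>?D. 1 \<le> e i - d i} = {}" by auto
      then show ?thesis using False by simp
    qed
    finally show ?thesis using True by (simp add: L_def)
  qed
qed

lemma lemB1: "ms_mult (L i B) H = L i (ms_mult B H)"
proof
  fix e
  show "ms_mult (L i B) H e = L i (ms_mult B H) e"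
  proof (cases "finite {i. e i \<noteq> 0}")
    case False then show ?thesis by (simp add: ms_mult_inf L_def)
  next
    case True
    let ?D = "{d::nat\<Rightarrow>nat. \<forall>i. d i \<le> e i}"
    let ?e' = "e(i := e i - 1)"
    let ?D' = "{d::nat\<Rightarrow>nat. \<forall>j. d j \<le> ?e' j}"
    have fD: "finite ?D" using finite_below[OF True] .
    have "ms_mult (L i B) H e = (\<Sum>d\<in>?D. B d * H (\<lambda>j. e j - d j) +
        (if 1 \<le> d i then B (d(i := d i - 1)) * H (\<lambda>j. e j - d j) else 0))"
      unfolding ms_mult_def
    proof (intro sum.cong refl)
      fix d assume d: "d \<in> ?D"
      have "finite {j. d j \<noteq> 0}"
      proof (rule finite_subset[OF _ True], rule subsetI)
        fix x assume "x \<in> {j. d j \<noteq> 0}"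
        then show "x \<in> {i. e i \<noteq> 0}" using d by (auto dest: spec[of _ x])
      qed
      then show "L i B d * H (\<lambda>j. e j - d j) = B d * H (\<lambda>j. e j - d j) +
        (if 1 \<le> d i then B (d(i := d i - 1)) * H (\<lambda>j. e j - d j) else 0)"
        unfolding L_def by (simp add: algebra_simps)
    qed
    also have "\<dots> = ms_mult B H e + (\<Sum>d\<in>{d\<in>?D. 1 \<le> d i}. B (d(i := d i - 1)) * H (\<lambda>j. e j - d j))"
      unfolding ms_mult_def by (simp only: sum.distrib sum.inter_filter[OF fD])
    also have "(\<Sum>d\<in>{d\<in>?D. 1 \<le> d i}. B (d(i := d i - 1)) * H (\<lambda>j. e j - d j)) =
        (if 1 \<le> e i then ms_mult B H ?e' else 0)"
    proof (cases "1 \<le> e i")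
      case True
      have "(\<Sum>d\<in>{d\<in>?D. 1 \<le> d i}. B (d(i := d i - 1)) * H (\<lambda>j. e j - d j)) =
            (\<Sum>d\<in>?D'. B d * H (\<lambda>j. ?e' j - d j))"
      proof (rule sum.reindex_bij_witness[where j = "\<lambda>d. d(i := d i - 1)" and i = "\<lambda>d. d(i := d i + 1)"])
        fix a assume "a \<in> {d\<in>?D. 1 \<le> d i}"
        then show "(a(i := a i - 1))(i := (a(i := a i - 1)) i + 1) = a" by (auto intro!: ext)
      next
        fix a assume a: "a \<in> {d\<in>?D. 1 \<le> d i}"
        have "\<forall>j. (a(i := a i - 1)) j \<le> ?e' j"
        proof
          fix j show "(a(i := a i - 1)) j \<le> ?e' j"
            using a by (cases "j = i") (auto dest: spec[of _ j])
        qed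
        then show "a(i := a i - 1) \<in> ?D'" by blast
      next
        fix b assume "b \<in> ?D'"
        then show "(b(i := b i + 1))(i := (b(i := b i + 1)) i - 1) = b" by (auto intro!: ext)
      next
        fix b assume b: "b \<in> ?D'"
        have "\<forall>j. (b(i := b i + 1)) j \<le> e j"
        proof
          fix j show "(b(i := b i + 1)) j \<le> e j"
            using b True by (cases "j = i") (auto dest: spec[of _ j])
        qed
        then show "b(i := b i + 1) \<in> {d\<in>?D. 1 \<le> d i}" by simp
      next
        fix a assume a: "a \<in> {d\<in>?D. 1 \<le> d i}"
        have "(\<lambda>j. ?e' j - (a(i := a i - 1)) j) = (\<lambda>j. e j - a j)"
          using a by (auto intro!: ext)
        then show "B (a(i := a i - 1)) * H (\<lambda>j. ?e' j - (a(i := a i - 1)) j) =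
            B (a(i := a i - 1)) * H (\<lambda>j. e j - a j)" by simp
      qed
      then show ?thesis using True unfolding ms_mult_def by simp
    next
      case False
      have E: "{d\<in>?D. 1 \<le> d i} = {}"
      proof (intro equalityI subsetI)
        fix d assume "d \<in> {d\<in>?D. 1 \<le> d i}"
        then have "d i \<le> e i" "1 \<le> d i" by auto
        with False show "d \<in> {}" by simp
      qed simp
      show ?thesis unfolding E using False by simp
    qed
    finally show ?thesis using True by (simp add: L_def)
  qed
qed

lemma lemC:
  assumes fin: "finite {i. e i \<noteq> 0}"
  shows "ms_mult (one_minus_sum k) h e = h e - (\<Sum>i<k. if 1 \<le> e i then h (e(i := e i - 1)) else 0)"
proof -
  let ?D = "{d::nat\<Rightarrow>nat. \<forall>i. d i \<le> e i}"
  let ?z = "(\<lambda>_. 0::nat)"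
  have fD: "finite ?D" using finite_below[OF fin] .
  have one: "(\<Sum>d\<in>?D. ms_one d * h (\<lambda>j. e j - d j)) = h e"
  proof -
    have "(\<Sum>d\<in>?D. ms_one d * h (\<lambda>j. e j - d j)) = (\<Sum>d\<in>?D. if d = ?z then h e else 0)"
      by (intro sum.cong refl) (simp add: ms_one_def)
    also have "\<dots> = h e" using fD by simp
    finally show ?thesis .
  qed
  have var: "(\<Sum>d\<in>?D. ms_var i d * h (\<lambda>j. e j - d j)) = (if 1 \<le> e i then h (e(i := e i - 1)) else 0)" for i
  proof -
    let ?d = "(\<lambda>_. 0::nat)(i := 1)"
    have 1: "(\<lambda>i'. e i' - ?d i') = e(i := e i - 1)" by auto
    have "(\<Sum>d\<in>?D. ms_var i d * h (\<lambda>j. e j - d j)) = (\<Sum>d\<in>?D. if d = ?d then h (e(i := e i - 1)) else 0)"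
    proof (intro sum.cong refl)
      fix d show "ms_var i d * h (\<lambda>j. e j - d j) = (if d = ?d then h (e(i := e i - 1)) else 0)"
      proof (cases "d = ?d")
        case True then show ?thesis using 1 by (simp add: ms_var_def)
      qed (simp add: ms_var_def)
    qed
    also have "\<dots> = (if 1 \<le> e i then h (e(i := e i - 1)) else 0)" using fD by simp
    finally show ?thesis .
  qed
  have "ms_mult (one_minus_sum k) h e = (\<Sum>d\<in>?D. ms_one d * h (\<lambda>j. e j - d j) - (\<Sum>i<k. ms_var i d * h (\<lambda>j. e j - d j)))"
    unfolding ms_mult_def one_minus_sum_def by (simp add: left_diff_distrib sum_distrib_right)
  also have "\<dots> = h e - (\<Sum>i<k. \<Sum>d\<in>?D. ms_var i d * h (\<lambda>j. e j - d j))"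
    by (simp only: sum_subtractf one) (simp add: sum.swap[of _ ?D])
  also have "\<dots> = h e - (\<Sum>i<k. if 1 \<le> e i then h (e(i := e i - 1)) else 0)"
    by (simp only: var)
  finally show ?thesis .
qed

definition deg :: "(nat \<Rightarrow> nat) \<Rightarrow> nat" where
  "deg e = sum e {i. e i \<noteq> 0}"

lemma deg_less:
  assumes fin: "finite {i. e i \<noteq> 0}" and d: "\<forall>i. d i \<le> e i" and nz: "d \<noteq> (\<lambda>_. 0)"
  shows "deg (\<lambda>j. e j - d j) < deg e"
proof -
  let ?S = "{i. e i \<noteq> 0}"
  have "deg (\<lambda>j. e j - d j) = sum (\<lambda>j. e j - d j) ?S"
    unfolding deg_def by (rule sum.mono_neutral_left[OF fin]) auto
  also have "\<dots> < sum e ?S"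
  proof (rule sum_strict_mono_ex1[OF fin])
    show "\<forall>x\<in>?S. e x - d x \<le> e x" by simp
    from nz obtain i where "d i \<noteq> 0" by auto
    moreover have "d i \<le> e i" using d by blast
    ultimately show "\<exists>a\<in>?S. e a - d a < e a" by (intro bexI[of _ i]) auto
  qed
  finally show ?thesis unfolding deg_def .
qed

lemma uniq0:
  assumes f0: "f (\<lambda>_. 0) = 1" and h0: "\<And>e. finite {i. e i \<noteq> 0} \<Longrightarrow> ms_mult f h e = 0"
  shows "finite {i. e i \<noteq> 0} \<Longrightarrow> h e = 0"
proof (induction "deg e" arbitrary: e rule: less_induct)
  case less
  let ?D = "{d::nat\<Rightarrow>nat. \<forall>i. d i \<le> e i}"
  let ?z = "(\<lambda>_. 0::nat)"
  have fD: "finite ?D" using finite_below[OF less.prems] .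
  have z: "?z \<in> ?D" by simp
  have "0 = ms_mult f h e" using h0[OF less.prems] by simp
  also have "\<dots> = f ?z * h (\<lambda>j. e j - ?z j) + (\<Sum>d\<in>?D - {?z}. f d * h (\<lambda>j. e j - d j))"
    unfolding ms_mult_def by (rule sum.remove[OF fD z])
  also have "(\<Sum>d\<in>?D - {?z}. f d * h (\<lambda>j. e j - d j)) = 0"
  proof (rule sum.neutral, rule ballI)
    fix d assume d: "d \<in> ?D - {?z}"
    have "h (\<lambda>j. e j - d j) = 0"
      using less.hyps[OF deg_less[OF less.prems]] d fin_sub[OF less.prems] by auto
    then show "f d * h (\<lambda>j. e j - d j) = 0" by simp
  qed
  finally show ?case using f0 by simp
qed

lemma inverse_eq:
  assumes f0: "f (\<lambda>_. 0) = 1" and g: "ms_mult f g = ms_one"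
    and ginf: "\<And>e. infinite {i. e i \<noteq> 0} \<Longrightarrow> g e = 0"
  shows "ms_inverse f = g"
  unfolding ms_inverse_def
proof (rule the_equality)
  show "ms_mult f g = ms_one \<and> (\<forall>e. infinite {i. e i \<noteq> 0} \<longrightarrow> g e = 0)" using g ginf by blast
next
  fix g' assume g': "ms_mult f g' = ms_one \<and> (\<forall>e. infinite {i. e i \<noteq> 0} \<longrightarrow> g' e = 0)"
  show "g' = g"
  proof
    fix e
    show "g' e = g e"
    proof (cases "finite {i. e i \<noteq> 0}")
      case False then show ?thesis using g' ginf by simp
    next
      case True
      let ?h = "\<lambda>e. g' e - g e"
      have "ms_mult f ?h e = 0" if "finite {i. e i \<noteq> 0}" for e
      proof -
        have "ms_mult f ?h e = ms_mult f g' e - ms_mult f g e"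
          unfolding ms_mult_def by (simp add: right_diff_distrib sum_subtractf)
        then show ?thesis using g g' by simp
      qed
      from uniq0[OF f0 this True] show ?thesis by simp
    qed
  qed
qed


lemma D0: "D_a 0 a = S_a a" by (simp add: D_a_def)

definition G :: "nat \<Rightarrow> nat \<Rightarrow> mser" where
  "G k j = (\<lambda>e. if (\<forall>i\<ge>k. e i = 0) then int (card (D_a j (map e [0..<k]))) else 0)"

lemma fin_k: "\<forall>i\<ge>(k::nat). e i = (0::nat) \<Longrightarrow> finite {i. e i \<noteq> 0}"
proof (rule finite_subset[of _ "{..<k}"])
  assume "\<forall>i\<ge>k. e i = (0::nat)"
  then show "{i. e i \<noteq> 0} \<subseteq> {..<k}"
  proof (intro subsetI)
    fix x assume h: "\<forall>i\<ge>k. e i = (0::nat)" and "x \<in> {i. e i \<noteq> 0}"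
    then have "e x \<noteq> 0" by simp
    show "x \<in> {..<k}"
    proof (rule ccontr)
      assume "x \<notin> {..<k}" then have "k \<le> x" by simp
      with h \<open>e x \<noteq> 0\<close> show False by simp
    qed
  qed
qed simp

lemma map_upd: "i < k \<Longrightarrow> map (e(i := x)) [0..<k] = (map e [0..<k])[i := x]"
  by (rule nth_equalityI) auto

lemma G_inf: "infinite {i. e i \<noteq> 0} \<Longrightarrow> G k j e = 0"
  using fin_k unfolding G_def by auto

lemma step0: "ms_mult (denom 0 k) (G k 0) = ms_one"
proof
  fix e
  show "ms_mult (denom 0 k) (G k 0) e = ms_one e"
  proof (cases "finite {i. e i \<noteq> 0}")
    case False
    then have "e \<noteq> (\<lambda>_. 0)" by auto
    then show ?thesis using False by (simp add: ms_mult_inf ms_one_def)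
  next
    case True
    have C: "ms_mult (denom 0 k) (G k 0) e = G k 0 e - (\<Sum>i<k. if 1 \<le> e i then G k 0 (e(i := e i - 1)) else 0)"
      using lemC[OF True] by simp
    show ?thesis
    proof (cases "\<forall>i\<ge>k. e i = 0")
      case False
      then obtain i0 where i0: "i0 \<ge> k" "e i0 \<noteq> 0" by auto
      then have "e \<noteq> (\<lambda>_. 0)" by auto
      moreover have "G k 0 e = 0" by (simp only: G_def if_not_P[OF False])
      moreover have "G k 0 (e(i := e i - 1)) = 0" if "i < k" for i
      proof -
        have nn: "\<not> (\<forall>i'\<ge>k. (e(i := e i - 1)) i' = 0)" using i0 that by auto
        show ?thesis by (simp only: G_def if_not_P[OF nn])
      qed
      ultimately have "(\<Sum>i<k. if 1 \<le> e i then G k 0 (e(i := e i - 1)) else 0) = 0"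
        by (intro sum.neutral) simp
      then show ?thesis unfolding C using \<open>e \<noteq> _\<close> \<open>G k 0 e = 0\<close> by (simp add: ms_one_def)
    next
      case True
      let ?l = "map e [0..<k]"
      have Gu: "G k 0 (e(i := e i - 1)) = int (card (S_a (?l[i := ?l!i - 1])))" if "i < k" for i
        using True that by (simp add: G_def map_upd D0)
      have Ge: "G k 0 e = int (card (S_a ?l))" using True by (simp add: G_def D0)
      show ?thesis
      proof (cases "sum_list ?l = 0")
        case True': True
        then have "\<forall>i<k. e i = 0" by (auto simp: sum_list_eq_0_iff)
        with True have "e = (\<lambda>_. 0)" by (metis not_le)
        then show ?thesis unfolding C Ge using K0a[OF True'] by (simp add: ms_one_def)
      next
        case False
        then have "e \<noteq> (\<lambda>_. 0)" by (auto simp: sum_list_eq_0_iff)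
        have "(\<Sum>i<k. if 1 \<le> e i then G k 0 (e(i := e i - 1)) else 0) =
              (\<Sum>i<k. if 1 \<le> ?l!i then int (card (S_a (?l[i := ?l!i - 1]))) else 0)"
        proof (intro sum.cong refl)
          fix i assume "i \<in> {..<k}"
          then show "(if 1 \<le> e i then G k 0 (e(i := e i - 1)) else 0) =
              (if 1 \<le> ?l!i then int (card (S_a (?l[i := ?l!i - 1]))) else 0)"
            using Gu[of i] by simp
        qed
        also have "\<dots> = (\<Sum>i\<in>{i. i < length ?l \<and> 1 \<le> ?l!i}. int (card (S_a (?l[i := ?l!i - 1]))))"
          by (subst sum.inter_filter[symmetric]) (auto intro!: sum.cong)
        also have "\<dots> = int (card (S_a ?l))" using K0b[OF False] by simp
        finally show ?thesis unfolding C Ge using \<open>e \<noteq> _\<close> by (simp add: ms_one_def)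
      qed
    qed
  qed
qed

lemma stepG: "j < k \<Longrightarrow> G k j = L j (G k (Suc j))"
proof
  fix e assume jk: "j < k"
  show "G k j e = L j (G k (Suc j)) e"
  proof (cases "finite {i. e i \<noteq> 0}")
    case False then show ?thesis by (simp add: G_inf L_def)
  next
    case True
    show ?thesis
    proof (cases "\<forall>i\<ge>k. e i = 0")
      case False
      then show ?thesis using True jk unfolding G_def L_def by auto
    next
      case True': True
      let ?l = "map e [0..<k]"
      have "card (D_a j ?l) = card (D_a (Suc j) ?l) + (if 1 \<le> ?l!j then card (D_a (Suc j) (?l[j := ?l!j - 1])) else 0)"
        using K1[of j ?l] jk by simp
      then show ?thesis using True True' jk unfolding G_def L_def by (auto simp: map_upd)
    qed
  qed
qed

lemma denom_L: "denom (Suc j) k = L j (denom j k)"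
  by (simp add: lemA)

lemma ms_var0: "ms_var i (\<lambda>_. 0) = 0"
proof -
  have "(\<lambda>_. 0::nat) \<noteq> (\<lambda>_. 0)(i := 1)" by (metis fun_upd_same zero_neq_one)
  then show ?thesis unfolding ms_var_def by (rule if_not_P)
qed

lemma denom0: "denom j k (\<lambda>_. 0) = 1"
proof (induction j)
  case 0
  show ?case by (simp add: one_minus_sum_def ms_one_def ms_var0)
next
  case (Suc j) then show ?case by (simp only: denom.simps lemA) (simp add: L_def)
qed

lemma stepD: "j \<le> k \<Longrightarrow> ms_mult (denom j k) (G k j) = ms_one"
proof (induction j)
  case 0 then show ?case using step0 by simp
next
  case (Suc j)
  then have "ms_one = ms_mult (denom j k) (L j (G k (Suc j)))" using stepG[of j k] by simp
  also have "\<dots> = ms_mult (denom (Suc j) k) (G k (Suc j))"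
    by (simp only: lemB2 lemB1 denom.simps lemA)
  finally show ?case by simp
qed

theorem mainTheorem1:
  fixes a :: "nat list" and j :: nat
  assumes "j \<le> length a"
  shows "int (card (D_a j a)) = ms_inverse (denom j (length a)) (expvec a)"
proof -
  have "ms_inverse (denom j (length a)) = G (length a) j"
    using inverse_eq[OF denom0 stepD[OF assms] G_inf] by simp
  moreover have "map (expvec a) [0..<length a] = a"
    by (rule nth_equalityI) (auto simp: expvec_def)
  ultimately show ?thesis by (simp add: G_def expvec_def)
qed

end
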